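(* Let $\Gamma_1\vdash t:\tau$ and $\Gamma_2\vdash s:\rho$ with $\Gamma_1$ and $\Gamma_2$ disjoint, and let $x$ be a variable. Then $\pi(t[s/x])\preccurlyeq\pi(t)+\pi(s)$.
   Context: Types: $\rho,\tau::=\Diamond\mid\mathbf{B}\mid\tau\multimap\rho\mid\tau\otimes\rho\mid\tau\times\rho\mid\mathbf{L}(\tau)$. Raw terms: $r,s,t::=x^\tau\mid c\mid\lambda x^\tau.\,t\mid\langle t,s\rangle\mid ts\mid\{t\}$, where each variable $x^\tau$ carries a type (infinitely many variables of each type), application associates to the left, terms are identified up to renaming of bound variables ($\lambda$ is the only binder), and the constants $c$ with their types are $\mathsf{tt},\mathsf{ff}:\mathbf{B}$; $\mathsf{nil}_\tau:\mathbf{L}(\tau)$; $\mathsf{cons}_\tau:\Diamond\multimap\tau\multimap\mathbf{L}(\tau)\multimap\mathbf{L}(\tau)$; $\otimes_{\tau,\rho}:\tau\multimap\rho\multimap\tau\otimes\rho$. A context is a finite set of typed variables; $\Gamma_1,\Gamma_2$ denotes $\Gamma_1\cup\Gamma_2$ and presupposes $\Gamma_1\cap\Gamma_2=\emptyset$; $x^\tau$ also denotes $\{x^\tau\}$. The relation $\Gamma\vdash t:\tau$ is inductively defined by: (Var) $\Gamma,x^\tau\vdash x:\tau$; (Const) $\Gamma\vdash c:\tau$ for a constant $c$ of type $\tau$; ($\multimap^+$) from $\Gamma\cup\{x^\tau\}\vdash t:\rho$ infer $\Gamma\vdash\lambda x^\tau.t:\tau\multimap\rho$; ($\multimap^-$)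 from $\Gamma_1\vdash t:\tau\multimap\rho$ and $\Gamma_2\vdash s:\tau$ infer $\Gamma_1,\Gamma_2\vdash ts:\rho$; ($\times^+$) from $\Gamma\vdash t:\tau$ and $\Gamma\vdash s:\rho$ infer $\Gamma\vdash\langle t,s\rangle:\tau\times\rho$; ($\times^-_1$) from $\Gamma\vdash t:\tau\times\rho$ infer $\Gamma\vdash t\,\mathsf{tt}:\tau$; ($\times^-_0$) from $\Gamma\vdash t:\tau\times\rho$ infer $\Gamma\vdash t\,\mathsf{ff}:\rho$; ($\mathbf{B}^-$) from $\Gamma_1\vdash t:\mathbf{B}$, $\Gamma_2\vdash s:\tau$, $\Gamma_2\vdash r:\tau$ infer $\Gamma_1,\Gamma_2\vdash t\langle s,r\rangle:\tau$; ($\otimes^-$) from $\Gamma_1\vdash t:\tau\otimes\rho$ and $\Gamma_2,x^\tau,y^\rho\vdash s:\sigma$ infer $\Gamma_1,\Gamma_2\vdash t(\lambda x^\tau.\lambda y^\rho.s):\sigma$; ($\mathbf{L}^-$) from $\Gamma\vdash t:\mathbf{L}(\tau)$ and $\emptyset\vdash s:\Diamond\multimap\tau\multimap\rho\multimap\rho$ infer $\Gamma\vdash t\{s\}:\rho\multimap\rho$. A list with $n$ entries ($n\ge0$) is a term $\mathsf{cons}_\tau d_1a_1(\cdots(\mathsf{cons}_\tau d_na_n\,\mathsf{nil}_\tau)\cdots)$ with $d_i$ arbitrary terms of type $\Diamond$ and $a_i$ arbitrary terms of type $\tau$. Length: $\mathrm{len}(c)=\mathrm{len}(x)=1$; $\mathrm{len}(ts)=\mathrm{len}(t)+\mathrm{len}(s)$;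 $\mathrm{len}(\lambda x.s)=\mathrm{len}(s)+1$; $\mathrm{len}(\langle t,s\rangle)=\max(\mathrm{len}(t),\mathrm{len}(s))+1$; $\mathrm{len}(\{t\})=0$. $\mathbb{N}^{\mathrm{poly}}$ is the set of functions $\mathbb{N}\to\mathbb{N}$ pointwise bounded by a polynomial; $X$ is the identity, $X_n(m)=\min(n,m)$, natural numbers are identified with constant functions, $+,\cdot,\sup$ are pointwise sum, product and maximum, and $\preccurlyeq$ is the pointwise order. For every raw term $t$ define $\pi(t)\in\mathbb{N}^{\mathrm{poly}}$ by recursion: $\pi(x)=\pi(c)=0$; $\pi(ts)=\pi(t)+X_n\cdot\pi(h)+X_n\cdot\mathrm{len}(h)$ if $t$ is a list with $n$ entries and $s=\{h\}$, and $\pi(ts)=\pi(t)+\pi(s)$ otherwise; $\pi(\lambda x.t)=\pi(t)$; $\pi(\langle t,s\rangle)=\sup(\pi(t),\pi(s))$; $\pi(\{h\})=X\cdot\pi(h)+X\cdot\mathrm{len}(h)$. *)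

theory Defs
  imports Main
begin

datatype ty = Dia | Bool | Lolli ty ty | Tens ty ty | Prod ty ty | Lst ty

text \<open>A variable x^tau is a name together with its type (infinitely many per type).\<close>
type_synonym var = "nat \<times> ty"

datatype const = Tt | Ff | NilC ty | ConsC ty | TensC ty ty

fun ctype :: "const \<Rightarrow> ty" where
  "ctype Tt = Bool"
| "ctype Ff = Bool"
| "ctype (NilC t) = Lst t"
| "ctype (ConsC t) = Lolli Dia (Lolli t (Lolli (Lst t) (Lst t)))"
| "ctype (TensC t r) = Lolli t (Lolli r (Tens t r))"

datatype trm = V var | C const | Lam var trm | Pair trm trm | App trm trm | Brace trm

fun fv :: "trm \<Rightarrow> var set" where
  "fv (V x) = {x}"
| "fv (C c) = {}"
| "fv (Lam x t) = fv t - {x}"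
| "fv (Pair t s) = fv t \<union> fv s"
| "fv (App t s) = fv t \<union> fv s"
| "fv (Brace t) = fv t"

definition swapv :: "var \<Rightarrow> var \<Rightarrow> var \<Rightarrow> var" where
  "swapv a b v = (if v = a then b else if v = b then a else v)"

fun swap :: "var \<Rightarrow> var \<Rightarrow> trm \<Rightarrow> trm" where
  "swap a b (V x) = V (swapv a b x)"
| "swap a b (C c) = C c"
| "swap a b (Lam x t) = Lam (swapv a b x) (swap a b t)"
| "swap a b (Pair t s) = Pair (swap a b t) (swap a b s)"
| "swap a b (App t s) = App (swap a b t) (swap a b s)"
| "swap a b (Brace t) = Brace (swap a b t)"

lemma size_swap[simp]: "size (swap a b t) = size t"
  by (induction t) auto

definition fresh_name :: "var set \<Rightarrow> ty \<Rightarrow> nat" where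
  "fresh_name S T = (LEAST n. (n, T) \<notin> S)"

text \<open>Capture-avoiding substitution: subst t x s is t[s/x].\<close>
function subst :: "trm \<Rightarrow> var \<Rightarrow> trm \<Rightarrow> trm" where
  "subst (V y) x s = (if y = x then s else V y)"
| "subst (C c) x s = C c"
| "subst (Lam y t) x s =
     (if y = x then Lam y t
      else if y \<notin> fv s then Lam y (subst t x s)
      else (let z = (fresh_name (fv s \<union> fv t \<union> {x, y}) (snd y), snd y)
            in Lam z (subst (swap y z t) x s)))"
| "subst (Pair t u) x s = Pair (subst t x s) (subst u x s)"
| "subst (App t u) x s = App (subst t x s) (subst u x s)"
| "subst (Brace t) x s = Brace (subst t x s)"
  by pat_completeness auto
termination
  by (relation "measure (\<lambda>(t, x, s). size t)") auto

inductive typing :: "var set \<Rightarrow> trm \<Rightarrow> ty \<Rightarrow> bool" where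
  TVar: "finite \<Gamma> \<Longrightarrow> x \<in> \<Gamma> \<Longrightarrow> typing \<Gamma> (V x) (snd x)"
| TConst: "finite \<Gamma> \<Longrightarrow> typing \<Gamma> (C c) (ctype c)"
| TLam: "typing (\<Gamma> \<union> {x}) t \<rho> \<Longrightarrow> typing \<Gamma> (Lam x t) (Lolli (snd x) \<rho>)"
| TApp: "typing \<Gamma>1 t (Lolli \<tau> \<rho>) \<Longrightarrow> typing \<Gamma>2 s \<tau> \<Longrightarrow> \<Gamma>1 \<inter> \<Gamma>2 = {}
          \<Longrightarrow> typing (\<Gamma>1 \<union> \<Gamma>2) (App t s) \<rho>"
| TPair: "typing \<Gamma> t \<tau> \<Longrightarrow> typing \<Gamma> s \<rho> \<Longrightarrow> typing \<Gamma> (Pair t s) (Prod \<tau> \<rho>)"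
| TProj1: "typing \<Gamma> t (Prod \<tau> \<rho>) \<Longrightarrow> typing \<Gamma> (App t (C Tt)) \<tau>"
| TProj0: "typing \<Gamma> t (Prod \<tau> \<rho>) \<Longrightarrow> typing \<Gamma> (App t (C Ff)) \<rho>"
| TBool: "typing \<Gamma>1 t Bool \<Longrightarrow> typing \<Gamma>2 s \<tau> \<Longrightarrow> typing \<Gamma>2 r \<tau> \<Longrightarrow> \<Gamma>1 \<inter> \<Gamma>2 = {}
          \<Longrightarrow> typing (\<Gamma>1 \<union> \<Gamma>2) (App t (Pair s r)) \<tau>"
| TTens: "typing \<Gamma>1 t (Tens \<tau> \<rho>) \<Longrightarrow> typing (\<Gamma>2 \<union> {x, y}) s \<sigma>
          \<Longrightarrow> snd x = \<tau> \<Longrightarrow> snd y = \<rho> \<Longrightarrow> x \<notin> \<Gamma>2 \<Longrightarrow> y \<notin> \<Gamma>2 \<Longrightarrow> x \<noteq> y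
          \<Longrightarrow> \<Gamma>1 \<inter> \<Gamma>2 = {}
          \<Longrightarrow> typing (\<Gamma>1 \<union> \<Gamma>2) (App t (Lam x (Lam y s))) \<sigma>"
| TList: "typing \<Gamma> t (Lst \<tau>) \<Longrightarrow> typing {} s (Lolli Dia (Lolli \<tau> (Lolli \<rho> \<rho>)))
          \<Longrightarrow> typing \<Gamma> (App t (Brace s)) (Lolli \<rho> \<rho>)"

text \<open>lst t = Some (tau, n) iff t is cons_tau d1 a1 (... (cons_tau dn an nil_tau)...).\<close>
fun lst :: "trm \<Rightarrow> (ty \<times> nat) option" where
  "lst (C (NilC \<tau>)) = Some (\<tau>, 0)"
| "lst (App (App (App (C (ConsC \<tau>)) d) a) r) =
     (case lst r of Some (\<tau>', n) \<Rightarrow> (if \<tau>' = \<tau> then Some (\<tau>, Suc n) else None) | None \<Rightarrow> None)"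
| "lst _ = None"

definition is_list :: "trm \<Rightarrow> nat \<Rightarrow> bool" where
  "is_list t n \<longleftrightarrow> (\<exists>\<tau>. lst t = Some (\<tau>, n))"

fun len :: "trm \<Rightarrow> nat" where
  "len (V x) = 1"
| "len (C c) = 1"
| "len (App t s) = len t + len s"
| "len (Lam x s) = len s + 1"
| "len (Pair t s) = max (len t) (len s) + 1"
| "len (Brace t) = 0"

fun pi :: "trm \<Rightarrow> nat \<Rightarrow> nat" where
  "pi (V x) = (\<lambda>m. 0)"
| "pi (C c) = (\<lambda>m. 0)"
| "pi (App t s) =
     (case s of
        Brace h \<Rightarrow> (if \<exists>n. is_list t n
                    then (\<lambda>m. pi t m + min (THE n. is_list t n) m * pi h m
                                   + min (THE n. is_list t n) m * len h)
                    else (\<lambda>m. pi t m + pi s m))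
      | _ \<Rightarrow> (\<lambda>m. pi t m + pi s m))"
| "pi (Lam x t) = pi t"
| "pi (Pair t s) = (\<lambda>m. max (pi t m) (pi s m))"
| "pi (Brace h) = (\<lambda>m. m * pi h m + m * len h)"

end

theory Submission
  imports Defs
begin

fun erase :: "trm \<Rightarrow> trm" where
  "erase (V y) = V (0, Bool)"
| "erase (C c) = C c"
| "erase (Lam y t) = Lam (0, Bool) (erase t)"
| "erase (Pair t u) = Pair (erase t) (erase u)"
| "erase (App t u) = App (erase t) (erase u)"
| "erase (Brace t) = Brace (erase t)"

lemma lst_erase: "lst (erase t) = lst t"
  by (induction t rule: lst.induct) (auto split: option.splits)

lemma is_list_erase: "is_list (erase t) = is_list t"
  by (rule ext) (simp add: is_list_def lst_erase)

lemma len_erase: "len (erase t) = len t"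
  by (induction t) auto

lemma pi_erase: "pi (erase t) = pi t"
proof (induction t rule: measure_induct_rule[of size])
  case (less t)
  show ?case
  proof (cases t)
    case (App a b)
    have ha: "pi (erase a) = pi a" using less App by simp
    show ?thesis
    proof (cases b)
      case (Brace h)
      have hh: "pi (erase h) = pi h" using less App Brace by simp
      show ?thesis using App Brace ha hh by (auto simp add: is_list_erase len_erase)
    next
      case (App c d)
      have hb: "pi (erase b) = pi b" using less \<open>t = App a b\<close> by simp
      show ?thesis using \<open>t = App a b\<close> App ha hb by simp
    next
      case (Lam c d)
      have hb: "pi (erase b) = pi b" using less \<open>t = App a b\<close> by simp
      show ?thesis using \<open>t = App a b\<close> Lam ha hb by simp
    next
      case (Pair c d)
      have hb: "pi (erase b) = pi b" using less \<open>t = App a b\<close> by simp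
      show ?thesis using \<open>t = App a b\<close> Pair ha hb by simp
    qed (use App ha in auto)
  qed (use less in \<open>auto simp: len_erase\<close>)
qed

lemma erase_swap: "erase (swap a b t) = erase t"
  by (induction t) auto

lemma finite_fv: "finite (fv t)"
  by (induction t) auto

lemma fresh_name_notin:
  assumes "finite S" shows "(fresh_name S T, T) \<notin> S"
proof -
  have "{n. (n, T) \<in> S} \<subseteq> fst ` S" by force
  then have "finite {n. (n, T) \<in> S}"
    using assms by (meson finite_imageI finite_subset)
  then obtain n where "n \<notin> {n. (n, T) \<in> S}"
    using ex_new_if_finite[OF infinite_UNIV_nat] by blast
  then have "\<exists>n. (n, T) \<notin> S" by blast
  then show ?thesis unfolding fresh_name_def by (rule LeastI_ex)
qed

lemma swapv_inj: "(swapv a b u = swapv a b v) = (u = v)"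
  by (auto simp: swapv_def)

lemma fv_swap: "fv (swap a b t) = swapv a b ` fv t"
proof (induction t)
  case (Lam y t)
  have "inj (swapv a b)" by (simp add: inj_def swapv_inj)
  then show ?case using Lam by (simp add: image_set_diff)
qed (simp_all add: image_Un)

lemma erase_subst_fresh: "x \<notin> fv t \<Longrightarrow> erase (subst t x s) = erase t"
proof (induction t x s rule: subst.induct)
  case (3 y t x s)
  show ?case
  proof (cases "y = x")
    case False
    show ?thesis
    proof (cases "y \<in> fv s")
      case False
      then show ?thesis using 3 \<open>y \<noteq> x\<close> by auto
    next
      case True
      define z where "z = (fresh_name (fv s \<union> fv t \<union> {x, y}) (snd y), snd y)"
      have zn: "z \<notin> fv s \<union> fv t \<union> {x, y}"
        unfolding z_def by (rule fresh_name_notin) (simp add: finite_fv)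
      have "x \<notin> fv (swap y z t)"
        using 3(3) zn \<open>y \<noteq> x\<close> by (auto simp: fv_swap swapv_def)
      then have "erase (subst (swap y z t) x s) = erase t"
        using 3(2)[OF \<open>y \<noteq> x\<close> _ z_def] True by (simp add: erase_swap)
      moreover have "subst (Lam y t) x s = Lam z (subst (swap y z t) x s)"
        using \<open>y \<noteq> x\<close> True by (simp add: Let_def z_def)
      ultimately show ?thesis by simp
    qed
  qed simp
qed auto

lemma pi_subst_fresh: "x \<notin> fv t \<Longrightarrow> pi (subst t x s) = pi t"
  by (metis pi_erase erase_subst_fresh)

lemma len_subst_fresh: "x \<notin> fv t \<Longrightarrow> len (subst t x s) = len t"
  by (metis len_erase erase_subst_fresh)

lemma lst_subst: "lst a = Some p \<Longrightarrow> lst (subst a x s) = Some p"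
  by (induction a arbitrary: p rule: lst.induct) (auto split: option.splits if_splits)

lemma is_list_subst: "is_list a n \<Longrightarrow> is_list (subst a x s) n"
  using lst_subst is_list_def by metis

lemma is_list_unique: "is_list a n \<Longrightarrow> (THE n. is_list a n) = n"
  by (rule the_equality) (auto simp: is_list_def)

lemma pi_App_le: "pi (App a b) m \<le> pi a m + pi b m"
proof (cases b)
  case (Brace h)
  show ?thesis
  proof (cases "\<exists>n. is_list a n")
    case True
    then obtain n where n: "is_list a n" by blast
    have "min n m * pi h m \<le> m * pi h m" "min n m * len h \<le> m * len h" by auto
    then have "min n m * pi h m + min n m * len h \<le> m * pi h m + m * len h" by (rule add_mono)
    then show ?thesis using Brace n by (auto simp add: is_list_unique)
  qed (auto simp add: Brace)
qed auto

fun lin :: "var \<Rightarrow> trm \<Rightarrow> bool" where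
  "lin x (V y) = True"
| "lin x (C c) = True"
| "lin x (Lam y t) = (y = x \<or> lin x t)"
| "lin x (Pair a b) = (lin x a \<and> lin x b)"
| "lin x (App a b) = ((x \<notin> fv a \<or> x \<notin> fv b) \<and> lin x a \<and> lin x b)"
| "lin x (Brace h) = (x \<notin> fv h)"

lemma lin_swap: "lin (swapv a b x) (swap a b t) = lin x t"
proof (induction t)
  case (Lam y t) then show ?case by (auto simp: swapv_inj)
next
  case (App t1 t2) then show ?case by (auto simp: fv_swap swapv_inj)
next
  case (Brace t) then show ?case by (auto simp: fv_swap swapv_inj)
qed auto

lemma main: "lin x t \<Longrightarrow> pi (subst t x s) m \<le> pi t m + pi s m"
proof (induction t x s rule: subst.induct)
  case (3 y t x s)
  show ?case
  proof (cases "y = x")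
    case False
    then have lt: "lin x t" using 3(3) by simp
    show ?thesis
    proof (cases "y \<in> fv s")
      case False
      then show ?thesis using 3(1) lt \<open>y \<noteq> x\<close> by auto
    next
      case True
      define z where "z = (fresh_name (fv s \<union> fv t \<union> {x, y}) (snd y), snd y)"
      have zn: "z \<notin> fv s \<union> fv t \<union> {x, y}"
        unfolding z_def by (rule fresh_name_notin) (simp add: finite_fv)
      have "swapv y z x = x" using zn \<open>y \<noteq> x\<close> by (auto simp: swapv_def)
      then have "lin x (swap y z t)" using lin_swap[of y z x t] lt by simp
      then have "pi (subst (swap y z t) x s) m \<le> pi (swap y z t) m + pi s m"
        using 3(2)[OF \<open>y \<noteq> x\<close> _ z_def] True by simp
      moreover have "pi (swap y z t) = pi t" by (metis pi_erase erase_swap)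
      moreover have "subst (Lam y t) x s = Lam z (subst (swap y z t) x s)"
        using \<open>y \<noteq> x\<close> True by (simp add: Let_def z_def)
      ultimately show ?thesis by simp
    qed
  qed simp
next
  case (5 a b x s)
  have IHa: "pi (subst a x s) m \<le> pi a m + pi s m" using 5 by simp
  have IHb: "pi (subst b x s) m \<le> pi b m + pi s m" using 5 by simp
  have le: "pi (subst (App a b) x s) m \<le> pi (subst a x s) m + pi (subst b x s) m"
    using pi_App_le by simp
  show ?case
  proof (cases "\<exists>h. b = Brace h")
    case False
    then have e: "pi (App a b) m = pi a m + pi b m" by (cases b) auto
    show ?thesis
    proof (cases "x \<in> fv b")
      case True
      then have "x \<notin> fv a" using 5(3) by auto
      then show ?thesis using le IHb e pi_subst_fresh by simp
    next
      case False
      then show ?thesis using le IHa e pi_subst_fresh by simp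
    qed
  next
    case True
    then obtain h where b: "b = Brace h" by blast
    have xh: "x \<notin> fv h" using 5(3) b by simp
    have sb: "subst b x s = Brace (subst h x s)" using b by simp
    have ph: "pi (subst h x s) = pi h" "len (subst h x s) = len h"
      using xh pi_subst_fresh len_subst_fresh by auto
    show ?thesis
    proof (cases "\<exists>n. is_list a n")
      case True
      then obtain n where n: "is_list a n" by blast
      have n': "is_list (subst a x s) n" using is_list_subst[OF n] .
      have "pi (subst (App a b) x s) m = pi (subst a x s) m + min n m * pi h m + min n m * len h"
        using n' sb ph by (auto simp: is_list_unique)
      moreover have "pi (App a b) m = pi a m + min n m * pi h m + min n m * len h"
        using n b by (auto simp: is_list_unique)
      ultimately show ?thesis using IHa by simp
    next
      case False
      then have e: "pi (App a b) m = pi a m + pi b m" using b by auto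
      have "pi (subst b x s) m = pi b m" using sb ph b by simp
      then show ?thesis using le IHa e by simp
    qed
  qed
next
  case (1 y x s)
  then show ?case by simp
next
  case (2 c x s)
  then show ?case by simp
next
  case (4 a b x s)
  have "pi (subst a x s) m \<le> pi a m + pi s m" "pi (subst b x s) m \<le> pi b m + pi s m"
    using 4 by simp_all
  then show ?case by (simp add: max_def)
next
  case (6 h x s)
  then have "x \<notin> fv h" by simp
  then show ?case using pi_subst_fresh len_subst_fresh by simp
qed

lemma typing_fv: "typing \<Gamma> t \<tau> \<Longrightarrow> fv t \<subseteq> \<Gamma>"
  by (induction rule: typing.induct) auto

lemma typing_lin: "typing \<Gamma> t \<tau> \<Longrightarrow> lin x t"
proof (induction rule: typing.induct)
  case (TApp \<Gamma>1 t \<tau> \<rho> \<Gamma>2 s)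
  then show ?case using typing_fv by fastforce
next
  case (TBool \<Gamma>1 t \<Gamma>2 s \<tau> r)
  then show ?case using typing_fv by fastforce
next
  case (TTens \<Gamma>1 t \<tau> \<rho> \<Gamma>2 x' y s \<sigma>)
  then show ?case using typing_fv by fastforce
next
  case (TList \<Gamma> t \<tau> s \<rho>)
  then show ?case using typing_fv by fastforce
qed auto

theorem lemma4p7:
  fixes \<Gamma>1 \<Gamma>2 :: "var set" and t s :: trm and \<tau> \<rho> :: ty and x :: var
  assumes "typing \<Gamma>1 t \<tau>" and "typing \<Gamma>2 s \<rho>" and "\<Gamma>1 \<inter> \<Gamma>2 = {}"
  shows "\<forall>m. pi (subst t x s) m \<le> pi t m + pi s m"
  using main typing_lin[OF assms(1)] by blast

end
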